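(* Let $\mathcal{B}\models Th(\mathbb{N})$ be nonstandard and fix a nonstandard $\Delta\in B$. Let $\mathcal{A}$ be the substructure of $\mathcal{B}$ with universe $$A=\{Q+z : z\in\mathbb{Z},\ Q\in B,\ Q+z\in B,\ \text{and } n\mid Q \text{ and } 2^{n\Delta}\mid Q \text{ for all standard } 0<n\in\mathbb{N}\}.$$ Then $\mathcal{A}$ satisfies Presburger arithmetic.
   Context: $Th(\mathbb{N})$ is the complete theory of $\langle\mathbb{N},0,1,+,\cdot,\le\rangle$; $2^{n\Delta}$ is computed with the exponential definable in $\mathcal{B}$. Presburger arithmetic here means the axioms: $0\neq z+1$; $x\ne0\to\exists z\,(x=z+1)$; $x+z=y+z\to x=y$; $x+0=x$; associativity and commutativity of $+$; $x\le y\leftrightarrow\exists z\,(x+z=y)$; and for each standard $0<n$, $\exists y\,(ny\le x<n(y+1))$. *)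

theory Defs
  imports Main
begin

datatype tm = Var nat | Zero | One | Plus tm tm | Times tm tm

datatype fm = Eq tm tm | Le tm tm | Neg fm | Conj fm fm | Ex nat fm

fun fv_tm :: "tm \<Rightarrow> nat set" where
  "fv_tm (Var i) = {i}"
| "fv_tm Zero = {}"
| "fv_tm One = {}"
| "fv_tm (Plus s t) = fv_tm s \<union> fv_tm t"
| "fv_tm (Times s t) = fv_tm s \<union> fv_tm t"

fun fv :: "fm \<Rightarrow> nat set" where
  "fv (Eq s t) = fv_tm s \<union> fv_tm t"
| "fv (Le s t) = fv_tm s \<union> fv_tm t"
| "fv (Neg p) = fv p"
| "fv (Conj p q) = fv p \<union> fv q"
| "fv (Ex x p) = fv p - {x}"

record 'a struc =
  univ :: "'a set"
  zer :: 'a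
  on :: 'a
  pl :: "'a \<Rightarrow> 'a \<Rightarrow> 'a"
  tms :: "'a \<Rightarrow> 'a \<Rightarrow> 'a"
  le :: "'a \<Rightarrow> 'a \<Rightarrow> bool"

definition wf_struc :: "'a struc \<Rightarrow> bool" where
  "wf_struc M \<longleftrightarrow> zer M \<in> univ M \<and> on M \<in> univ M \<and>
     (\<forall>x\<in>univ M. \<forall>y\<in>univ M. pl M x y \<in> univ M \<and> tms M x y \<in> univ M)"

fun eval :: "'a struc \<Rightarrow> (nat \<Rightarrow> 'a) \<Rightarrow> tm \<Rightarrow> 'a" where
  "eval M e (Var i) = e i"
| "eval M e Zero = zer M"
| "eval M e One = on M"
| "eval M e (Plus s t) = pl M (eval M e s) (eval M e t)"
| "eval M e (Times s t) = tms M (eval M e s) (eval M e t)"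

fun sat :: "'a struc \<Rightarrow> (nat \<Rightarrow> 'a) \<Rightarrow> fm \<Rightarrow> bool" where
  "sat M e (Eq s t) \<longleftrightarrow> eval M e s = eval M e t"
| "sat M e (Le s t) \<longleftrightarrow> le M (eval M e s) (eval M e t)"
| "sat M e (Neg p) \<longleftrightarrow> \<not> sat M e p"
| "sat M e (Conj p q) \<longleftrightarrow> sat M e p \<and> sat M e q"
| "sat M e (Ex x p) \<longleftrightarrow> (\<exists>a\<in>univ M. sat M (e(x := a)) p)"

definition Nat_struc :: "nat struc" where
  "Nat_struc = \<lparr>univ = UNIV, zer = 0, on = 1, pl = (+), tms = (*), le = (\<le>)\<rparr>"

definition model_ThN :: "'a struc \<Rightarrow> bool" where
  "model_ThN B \<longleftrightarrow> wf_struc B \<and>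
     (\<forall>\<phi>. fv \<phi> = {} \<longrightarrow> sat Nat_struc (\<lambda>_. 0) \<phi> \<longrightarrow> sat B (\<lambda>_. zer B) \<phi>)"

fun num :: "'a struc \<Rightarrow> nat \<Rightarrow> 'a" where
  "num M 0 = zer M"
| "num M (Suc k) = pl M (num M k) (on M)"

definition nonstandard_elt :: "'a struc \<Rightarrow> 'a \<Rightarrow> bool" where
  "nonstandard_elt M x \<longleftrightarrow> x \<in> univ M \<and> x \<notin> range (num M)"

definition env3 :: "'a struc \<Rightarrow> 'a \<Rightarrow> 'a \<Rightarrow> 'a \<Rightarrow> nat \<Rightarrow> 'a" where
  "env3 M x y z = (\<lambda>i. if i = 0 then x else if i = 1 then y else if i = 2 then z else zer M)"

definition defines_exp :: "fm \<Rightarrow> bool" where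
  "defines_exp \<phi> \<longleftrightarrow> fv \<phi> \<subseteq> {0,1,2} \<and>
     (\<forall>a b c :: nat. sat Nat_struc (env3 Nat_struc a b c) \<phi> \<longleftrightarrow> c = a ^ b)"

text \<open>The exponential definable in B: z = x^y in B via a formula defining
  exponentiation in N (all such formulas agree in any model of Th(N)).\<close>

definition exp_rel :: "'a struc \<Rightarrow> 'a \<Rightarrow> 'a \<Rightarrow> 'a \<Rightarrow> bool" where
  "exp_rel B x y z \<longleftrightarrow> (\<exists>\<phi>. defines_exp \<phi> \<and> sat B (env3 B x y z) \<phi>)"

definition dvd_in :: "'a struc \<Rightarrow> 'a \<Rightarrow> 'a \<Rightarrow> bool" where
  "dvd_in B d Q \<longleftrightarrow> (\<exists>w\<in>univ B. tms B d w = Q)"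

definition good :: "'a struc \<Rightarrow> 'a \<Rightarrow> 'a \<Rightarrow> bool" where
  "good B \<Delta> Q \<longleftrightarrow> Q \<in> univ B \<and>
     (\<forall>n::nat. 0 < n \<longrightarrow> dvd_in B (num B n) Q \<and>
        (\<exists>z\<in>univ B. exp_rel B (num B 2) (tms B (num B n) \<Delta>) z \<and> dvd_in B z Q))"

text \<open>A = { Q + z : z integer, Q good, Q + z in B }; Q + z with z = -k means
  the element x with x + k = Q.\<close>

definition A_univ :: "'a struc \<Rightarrow> 'a \<Rightarrow> 'a set" where
  "A_univ B \<Delta> = {x \<in> univ B. \<exists>Q. good B \<Delta> Q \<and>
      (\<exists>k::nat. x = pl B Q (num B k) \<or> pl B x (num B k) = Q)}"

definition substructure :: "'a set \<Rightarrow> 'a struc \<Rightarrow> bool" where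
  "substructure A B \<longleftrightarrow> A \<subseteq> univ B \<and> zer B \<in> A \<and> on B \<in> A \<and>
     (\<forall>x\<in>A. \<forall>y\<in>A. pl B x y \<in> A \<and> tms B x y \<in> A)"

definition restrict_struc :: "'a struc \<Rightarrow> 'a set \<Rightarrow> 'a struc" where
  "restrict_struc B A = B\<lparr>univ := A\<rparr>"

text \<open>n*y in the language of Presburger arithmetic: y + ... + y (n times).\<close>

fun nsum :: "'a struc \<Rightarrow> nat \<Rightarrow> 'a \<Rightarrow> 'a" where
  "nsum M 0 y = zer M"
| "nsum M (Suc n) y = pl M (nsum M n y) y"

definition presburger :: "'a struc \<Rightarrow> bool" where
  "presburger M \<longleftrightarrow>
     (\<forall>z\<in>univ M. zer M \<noteq> pl M z (on M)) \<and>
     (\<forall>x\<in>univ M. x \<noteq> zer M \<longrightarrow> (\<exists>z\<in>univ M. x = pl M z (on M))) \<and>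
     (\<forall>x\<in>univ M. \<forall>y\<in>univ M. \<forall>z\<in>univ M. pl M x z = pl M y z \<longrightarrow> x = y) \<and>
     (\<forall>x\<in>univ M. pl M x (zer M) = x) \<and>
     (\<forall>x\<in>univ M. \<forall>y\<in>univ M. \<forall>z\<in>univ M. pl M (pl M x y) z = pl M x (pl M y z)) \<and>
     (\<forall>x\<in>univ M. \<forall>y\<in>univ M. pl M x y = pl M y x) \<and>
     (\<forall>x\<in>univ M. \<forall>y\<in>univ M. le M x y \<longleftrightarrow> (\<exists>z\<in>univ M. pl M x z = y)) \<and>
     (\<forall>n::nat. 0 < n \<longrightarrow> (\<forall>x\<in>univ M. \<exists>y\<in>univ M.
        le M (nsum M n y) x \<and> le M x (nsum M n (pl M y (on M))) \<and>
        x \<noteq> nsum M n (pl M y (on M))))"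

end

theory Submission
  imports Defs "HOL-Number_Theory.Cong"
begin

definition FAll :: "nat \<Rightarrow> fm \<Rightarrow> fm" where "FAll x p = Neg (Ex x (Neg p))"
definition FImp :: "fm \<Rightarrow> fm \<Rightarrow> fm" where "FImp p q = Neg (Conj p (Neg q))"
definition FOr :: "fm \<Rightarrow> fm \<Rightarrow> fm" where "FOr p q = Neg (Conj (Neg p) (Neg q))"
fun FOrs :: "fm list \<Rightarrow> fm" where
  "FOrs [] = Neg (Eq Zero Zero)"
| "FOrs (p # ps) = FOr p (FOrs ps)"
fun FAlls :: "nat list \<Rightarrow> fm \<Rightarrow> fm" where
  "FAlls [] p = p"
| "FAlls (x # xs) p = FAll x (FAlls xs p)"

lemma sat_FAll[simp]: "sat M e (FAll x p) \<longleftrightarrow> (\<forall>a\<in>univ M. sat M (e(x:=a)) p)"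
  by (simp add: FAll_def)
lemma sat_FImp[simp]: "sat M e (FImp p q) \<longleftrightarrow> (sat M e p \<longrightarrow> sat M e q)"
  by (simp add: FImp_def)
lemma sat_FOr[simp]: "sat M e (FOr p q) \<longleftrightarrow> (sat M e p \<or> sat M e q)"
  by (simp add: FOr_def)
lemma sat_FOrs[simp]: "sat M e (FOrs ps) \<longleftrightarrow> (\<exists>p\<in>set ps. sat M e p)"
  by (induction ps) auto

lemma fv_FAll[simp]: "fv (FAll x p) = fv p - {x}" by (simp add: FAll_def)
lemma fv_FImp[simp]: "fv (FImp p q) = fv p \<union> fv q" by (simp add: FImp_def)
lemma fv_FOr[simp]: "fv (FOr p q) = fv p \<union> fv q" by (simp add: FOr_def)
lemma fv_FAlls: "fv (FAlls xs p) = fv p - set xs" by (induction xs) auto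

lemma finite_fv_tm: "finite (fv_tm t)" by (induction t) auto
lemma finite_fv: "finite (fv p)" by (induction p) (auto simp: finite_fv_tm)

lemma eval_cong: "(\<forall>v\<in>fv_tm t. e v = e' v) \<Longrightarrow> eval M e t = eval M e' t"
  by (induction t) auto
lemma sat_cong: "(\<forall>v\<in>fv p. e v = e' v) \<Longrightarrow> sat M e p = sat M e' p"
proof (induction p arbitrary: e e')
  case (Eq s t) then show ?case using eval_cong[of s e e' M] eval_cong[of t e e' M] by auto
next
  case (Le s t) then show ?case using eval_cong[of s e e' M] eval_cong[of t e e' M] by auto
next
  case (Ex x p)
  have "\<And>a. sat M (e(x:=a)) p = sat M (e'(x:=a)) p"
    by (rule Ex.IH) (use Ex.prems in auto)
  then show ?case by simp
next
  case (Conj p q)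
  have "sat M e p = sat M e' p" by (rule Conj.IH(1)) (use Conj.prems in auto)
  moreover have "sat M e q = sat M e' q" by (rule Conj.IH(2)) (use Conj.prems in auto)
  ultimately show ?case by simp
qed auto

lemma alls_true: "(\<And>e. sat M e p) \<Longrightarrow> sat M e (FAlls xs p)"
  by (induction xs arbitrary: e) auto

lemma alls_inst: "sat M e (FAlls xs p) \<Longrightarrow> \<forall>i\<in>set xs. e' i \<in> univ M \<Longrightarrow>
   sat M (\<lambda>i. if i \<in> set xs then e' i else e i) p"
proof (induction xs arbitrary: e)
  case Nil then show ?case by simp
next
  case (Cons x xs)
  have "sat M (e(x := e' x)) (FAlls xs p)" using Cons.prems by auto
  from Cons.IH[OF this] Cons.prems(2)
  have "sat M (\<lambda>i. if i \<in> set xs then e' i else (e(x := e' x)) i) p" by auto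
  moreover have "(\<lambda>i. if i \<in> set xs then e' i else (e(x := e' x)) i) =
      (\<lambda>i. if i \<in> set (x#xs) then e' i else e i)" by auto
  ultimately show ?case by simp
qed

lemma model_wf: "model_ThN B \<Longrightarrow> wf_struc B" unfolding model_ThN_def by blast

lemma transfer:
  assumes B: "model_ThN B" and N: "\<And>e. sat Nat_struc e p" and E: "\<And>i. e i \<in> univ B"
  shows "sat B e p"
proof -
  obtain xs where xs: "set xs = fv p" using finite_list[OF finite_fv[of p]] by (elim exE)
  have "fv (FAlls xs p) = {}" unfolding fv_FAlls xs by (rule Diff_cancel)
  moreover have "sat Nat_struc (\<lambda>_. 0) (FAlls xs p)" by (rule alls_true[OF N])
  moreover have "\<forall>\<phi>. fv \<phi> = {} \<longrightarrow> sat Nat_struc (\<lambda>_. 0) \<phi> \<longrightarrow> sat B (\<lambda>_. zer B) \<phi>"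
    using B unfolding model_ThN_def by (elim conjE)
  ultimately have "sat B (\<lambda>_. zer B) (FAlls xs p)" by blast
  moreover have "\<forall>i\<in>set xs. e i \<in> univ B" using E by blast
  ultimately have 1: "sat B (\<lambda>i. if i \<in> set xs then e i else zer B) p" by (rule alls_inst)
  have "sat B (\<lambda>i. if i \<in> set xs then e i else zer B) p = sat B e p"
    by (rule sat_cong) (simp add: xs)
  with 1 show ?thesis by simp
qed

definition envl :: "'a struc \<Rightarrow> 'a list \<Rightarrow> nat \<Rightarrow> 'a" where
  "envl M xs i = (if i < length xs then xs ! i else zer M)"

lemma transferB:
  assumes "model_ThN B" "\<And>e. sat Nat_struc e p" "set xs \<subseteq> univ B"
  shows "sat B (envl B xs) p"
proof (rule transfer[OF assms(1,2)])
  fix i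
  have "zer B \<in> univ B" using model_wf[OF assms(1)] by (simp add: wf_struc_def)
  then show "envl B xs i \<in> univ B" using assms(3) by (auto simp: envl_def)
qed

lemma Nat_simps[simp]: "univ Nat_struc = UNIV" "zer Nat_struc = 0" "on Nat_struc = 1"
  "pl Nat_struc = (+)" "tms Nat_struc = (*)" "le Nat_struc = (\<le>)"
  by (simp_all add: Nat_struc_def)

fun numt :: "nat \<Rightarrow> tm" where
  "numt 0 = Zero"
| "numt (Suc k) = Plus (numt k) One"
fun nsumt :: "nat \<Rightarrow> tm \<Rightarrow> tm" where
  "nsumt 0 t = Zero"
| "nsumt (Suc n) t = Plus (nsumt n t) t"

lemma eval_numt[simp]: "eval M e (numt k) = num M k" by (induction k) auto
lemma eval_nsumt[simp]: "eval M e (nsumt n t) = nsum M n (eval M e t)" by (induction n) auto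
lemma num_nat[simp]: "num Nat_struc k = k" by (induction k) auto
lemma nsum_nat[simp]: "nsum Nat_struc n y = n * y" by (induction n) auto
lemma fv_numt[simp]: "fv_tm (numt k) = {}" by (induction k) auto
lemma fv_nsumt: "fv_tm (nsumt n t) \<subseteq> fv_tm t" by (induction n) auto

lemma num_in: "wf_struc B \<Longrightarrow> num B k \<in> univ B"
  by (induction k) (auto simp: wf_struc_def)
lemma nsum_in: "wf_struc B \<Longrightarrow> y \<in> univ B \<Longrightarrow> nsum B n y \<in> univ B"
  by (induction n) (auto simp: wf_struc_def)

fun maxv :: "tm \<Rightarrow> nat" where
  "maxv (Var i) = i"
| "maxv Zero = 0"
| "maxv One = 0"
| "maxv (Plus s t) = max (maxv s) (maxv t)"
| "maxv (Times s t) = max (maxv s) (maxv t)"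

lemma maxv_fv: "v \<in> fv_tm t \<Longrightarrow> v \<le> maxv t" by (induction t) auto

lemma eval_upd_fresh[simp]: "maxv t < v \<Longrightarrow> eval M (e(v:=a)) t = eval M e t"
  by (induction t) auto

definition Rm :: "'a struc \<Rightarrow> 'a \<Rightarrow> 'a \<Rightarrow> 'a \<Rightarrow> 'a \<Rightarrow> bool" where
  "Rm M p q i r \<longleftrightarrow> (\<exists>t\<in>univ M. p = pl M (tms M t (pl M (on M) (tms M (pl M i (on M)) q))) r \<and>
      le M (pl M r (on M)) (pl M (on M) (tms M (pl M i (on M)) q)))"

definition BetaExp :: "'a struc \<Rightarrow> 'a \<Rightarrow> 'a \<Rightarrow> 'a \<Rightarrow> bool" where
  "BetaExp M x y z \<longleftrightarrow> (\<exists>p\<in>univ M. \<exists>q\<in>univ M. Rm M p q (zer M) (on M) \<and> Rm M p q y z \<and>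
     (\<forall>i\<in>univ M. le M (pl M i (on M)) y \<longrightarrow>
        (\<exists>u\<in>univ M. Rm M p q i u \<and> Rm M p q (pl M i (on M)) (tms M u x))))"

definition Rf :: "nat \<Rightarrow> tm \<Rightarrow> tm \<Rightarrow> tm \<Rightarrow> tm \<Rightarrow> fm" where
  "Rf w P Qv I R = Ex w (Conj (Eq P (Plus (Times (Var w) (Plus One (Times (Plus I One) Qv))) R))
      (Le (Plus R One) (Plus One (Times (Plus I One) Qv))))"

lemma sat_Rf: "maxv P < w \<Longrightarrow> maxv Qv < w \<Longrightarrow> maxv I < w \<Longrightarrow> maxv R < w \<Longrightarrow>
  sat M e (Rf w P Qv I R) \<longleftrightarrow> Rm M (eval M e P) (eval M e Qv) (eval M e I) (eval M e R)"
proof -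
  assume h: "maxv P < w" "maxv Qv < w" "maxv I < w" "maxv R < w"
  have e: "\<And>a. eval M (e(w:=a)) P = eval M e P" "\<And>a. eval M (e(w:=a)) Qv = eval M e Qv"
     "\<And>a. eval M (e(w:=a)) I = eval M e I" "\<And>a. eval M (e(w:=a)) R = eval M e R"
    using h by (simp_all only: eval_upd_fresh)
  show ?thesis unfolding Rf_def Rm_def sat.simps eval.simps e fun_upd_same by (rule refl)
qed

definition expf :: "tm \<Rightarrow> tm \<Rightarrow> tm \<Rightarrow> fm" where
  "expf tx ty tz = (let b = Suc (max (maxv tx) (max (maxv ty) (maxv tz)))
     in Ex b (Ex (b+1) (Conj (Rf (b+4) (Var b) (Var (b+1)) Zero One)
          (Conj (Rf (b+4) (Var b) (Var (b+1)) ty tz)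
           (FAll (b+2) (FImp (Le (Plus (Var (b+2)) One) ty)
              (Ex (b+3) (Conj (Rf (b+4) (Var b) (Var (b+1)) (Var (b+2)) (Var (b+3)))
                  (Rf (b+4) (Var b) (Var (b+1)) (Plus (Var (b+2)) One) (Times (Var (b+3)) tx))))))))))"

lemma sat_expf_aux: "maxv tx < b \<Longrightarrow> maxv ty < b \<Longrightarrow> maxv tz < b \<Longrightarrow>
  sat M e (Ex b (Ex (b+1) (Conj (Rf (b+4) (Var b) (Var (b+1)) Zero One)
          (Conj (Rf (b+4) (Var b) (Var (b+1)) ty tz)
           (FAll (b+2) (FImp (Le (Plus (Var (b+2)) One) ty)
              (Ex (b+3) (Conj (Rf (b+4) (Var b) (Var (b+1)) (Var (b+2)) (Var (b+3)))
                  (Rf (b+4) (Var b) (Var (b+1)) (Plus (Var (b+2)) One) (Times (Var (b+3)) tx)))))))))) \<longleftrightarrow>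
   BetaExp M (eval M e tx) (eval M e ty) (eval M e tz)"
  by (simp add: sat_Rf BetaExp_def)

lemma sat_expf[simp]: "sat M e (expf tx ty tz) \<longleftrightarrow>
   BetaExp M (eval M e tx) (eval M e ty) (eval M e tz)"
  unfolding expf_def Let_def by (rule sat_expf_aux) auto

lemma fv_expf: "fv (expf tx ty tz) \<subseteq> fv_tm tx \<union> fv_tm ty \<union> fv_tm tz"
  using maxv_fv[of _ tx] maxv_fv[of _ ty] maxv_fv[of _ tz]
  by (auto simp: expf_def Let_def Rf_def)

lemma mod_char: "(m::nat) > 0 \<Longrightarrow> (\<exists>t. p = t * m + r \<and> r + 1 \<le> m) \<longleftrightarrow> r = p mod m"
proof
  assume "m > 0" "\<exists>t. p = t * m + r \<and> r + 1 \<le> m"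
  then obtain t where "p = t * m + r" "r < m" by auto
  then show "r = p mod m" by simp
next
  assume "m > 0" "r = p mod m"
  then have "p = (p div m) * m + r \<and> r + 1 \<le> m"
    by (metis Suc_eq_plus1 Suc_leI div_mult_mod_eq mod_less_divisor)
  then show "\<exists>t. p = t * m + r \<and> r + 1 \<le> m" by blast
qed

lemma Rm_nat: "Rm Nat_struc p q i r \<longleftrightarrow> r = p mod (1 + (i+1)*q)"
proof -
  have "Rm Nat_struc p q i r \<longleftrightarrow> (\<exists>t. p = t * (1 + (i+1)*q) + r \<and> r + 1 \<le> 1 + (i+1)*q)"
    by (simp add: Rm_def)
  also have "\<dots> \<longleftrightarrow> r = p mod (1 + (i+1)*q)" by (rule mod_char) simp
  finally show ?thesis .
qed

lemma beta_imp_pow: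
  assumes "BetaExp Nat_struc x y z" shows "z = x ^ y"
proof -
  from assms obtain p q where
    h0: "Rm Nat_struc p q 0 1" and hy: "Rm Nat_struc p q y z" and
    hs0: "\<forall>i. i + 1 \<le> y \<longrightarrow> (\<exists>u. Rm Nat_struc p q i u \<and> Rm Nat_struc p q (i+1) (u * x))"
    unfolding BetaExp_def Nat_simps by blast
  have h0: "1 = p mod (1 + (0+1)*q)" using h0 unfolding Rm_nat .
  have hy: "z = p mod (1 + (y+1)*q)" using hy unfolding Rm_nat .
  have hs: "\<forall>i. i + 1 \<le> y \<longrightarrow> (\<exists>u. u = p mod (1 + (i+1)*q) \<and> u * x = p mod (1 + (i+1+1)*q))"
    using hs0 unfolding Rm_nat .
  have "\<forall>i. i \<le> y \<longrightarrow> p mod (1 + (i+1)*q) = x ^ i"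
  proof (intro allI)
    fix i show "i \<le> y \<longrightarrow> p mod (1 + (i+1)*q) = x ^ i"
    proof (induction i)
      case 0 then show ?case using h0 by (metis power_0)
    next
      case (Suc i)
      show ?case
      proof
        assume "Suc i \<le> y"
        then have "i + 1 \<le> y" by simp
        with hs obtain u where "u = p mod (1 + (i+1)*q)" "u * x = p mod (1 + (i+1+1)*q)" by blast
        with Suc.IH \<open>i+1 \<le> y\<close> show "p mod (1 + (Suc i+1)*q) = x ^ Suc i"
          by (simp add: mult.commute)
      qed
    qed
  qed
  then show ?thesis using hy by auto
qed

lemma pow_le_aux: "i \<le> y \<Longrightarrow> (x::nat) ^ i \<le> x ^ y + 1"
proof (cases "x = 0")
  case True then show ?thesis by (cases i) auto
next
  case False
  assume "i \<le> y"
  then have "x ^ i \<le> x ^ y" using False by (simp add: power_increasing)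
  then show ?thesis by simp
qed

lemma beta_moduli_coprime:
  fixes q K :: nat
  assumes K: "y \<le> K" and q: "q = fact K" and ij: "i < j" "j \<le> y"
  shows "coprime (1 + (i+1)*q) (1 + (j+1)*q)"
proof -
  let ?d = "gcd (1 + (i+1)*q) (1 + (j+1)*q)"
  obtain d where jd: "j = i + d" using ij by (metis less_imp_add_positive)
  have e: "(j+1) * (1 + (i+1)*q) = (i+1) * (1 + (j+1)*q) + (j - i)"
    unfolding jd by (simp add: algebra_simps)
  have d1: "?d dvd (j+1) * (1 + (i+1)*q)" by (rule dvd_mult) (rule gcd_dvd1)
  have d2: "?d dvd (i+1) * (1 + (j+1)*q)" by (rule dvd_mult) (rule gcd_dvd2)
  have d1': "?d dvd (i+1) * (1 + (j+1)*q) + (j - i)" using d1 e by metis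
  have "?d dvd (j - i)" using d1' d2 by (metis dvd_add_right_iff)
  moreover have "j - i > 0" using ij by simp
  ultimately have "?d \<le> j - i" by (simp add: dvd_imp_le)
  then have "?d \<le> K" using ij K by simp
  moreover have "?d > 0" by simp
  ultimately have "?d dvd fact K" using dvd_fact[of ?d K] by linarith
  then have "?d dvd (i+1)*q" using q by simp
  moreover have "?d dvd 1 + (i+1)*q" by simp
  ultimately have "?d dvd 1" by (metis dvd_add_right_iff add.commute)
  then show ?thesis by (simp add: coprime_iff_gcd_eq_1)
qed

lemma pow_imp_beta:
  assumes "z = x ^ y" shows "BetaExp Nat_struc x y z"
proof -
  define K where "K = y + x ^ y + 2"
  define q where "q = (fact K :: nat)"
  have Kq: "K \<le> q" unfolding q_def by (rule fact_ge_self)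
  define m where "m = (\<lambda>i::nat. 1 + (i+1)*q)"
  have cop: "\<forall>i\<in>{..y}. \<forall>j\<in>{..y}. i \<noteq> j \<longrightarrow> coprime (m i) (m j)"
  proof (intro ballI impI)
    fix i j assume ij: "i \<in> {..y}" "j \<in> {..y}" "i \<noteq> j"
    show "coprime (m i) (m j)"
    proof (cases "i < j")
      case True then show ?thesis unfolding m_def
        using beta_moduli_coprime[of y K q i j] ij K_def q_def by auto
    next
      case False then have "j < i" using ij by simp
      then have "coprime (m j) (m i)" unfolding m_def
        using beta_moduli_coprime[of y K q j i] ij K_def q_def by auto
      then show ?thesis by (simp add: coprime_commute)
    qed
  qed
  obtain p where p: "\<forall>i\<in>{..y}. [p = x ^ i] (mod m i)"
    using chinese_remainder_nat[OF finite_atMost cop] by blast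
  have pm: "p mod m i = x ^ i" if "i \<le> y" for i
  proof -
    have "x ^ i \<le> x ^ y + 1" using pow_le_aux[OF that] .
    also have "\<dots> < K" unfolding K_def by simp
    also have "K \<le> q" by (rule Kq)
    also have "q \<le> (i+1)*q" by simp
    also have "\<dots> < m i" unfolding m_def by simp
    finally have "x ^ i < m i" .
    then show ?thesis using p that by (simp add: cong_def)
  qed
  have A: "1 = p mod (1 + (0+1)*q) \<and> z = p mod (1 + (y+1)*q) \<and>
     (\<forall>i\<in>UNIV. i + 1 \<le> y \<longrightarrow> (\<exists>u\<in>UNIV. u = p mod (1 + (i+1)*q) \<and> u * x = p mod (1 + (i+1+1)*q)))"
  proof (intro conjI ballI impI)
    show "1 = p mod (1 + (0+1)*q)" using pm[of 0] unfolding m_def by simp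
    show "z = p mod (1 + (y+1)*q)" using pm[of y] assms unfolding m_def by simp
    fix i assume "i + 1 \<le> y"
    then show "\<exists>u\<in>UNIV. u = p mod (1 + (i+1)*q) \<and> u * x = p mod (1 + (i+1+1)*q)"
      using pm[of i] pm[of "i+1"] unfolding m_def by simp
  qed
  show ?thesis unfolding BetaExp_def Rm_nat Nat_simps using A by blast
qed

lemma BetaExp_nat[simp]: "BetaExp Nat_struc x y z \<longleftrightarrow> z = x ^ y"
  using beta_imp_pow pow_imp_beta by blast

notation Plus (infixl "\<oplus>" 65)
notation Times (infixl "\<otimes>" 70)
notation Eq (infix "\<doteq>" 50)
notation Le (infix "\<preceq>" 50)
notation Conj (infixr "\<sqinter>" 35)
notation FImp (infixr "\<Rrightarrow>" 25)
notation FOr (infixr "\<squnion>" 30)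

definition Dv :: "tm \<Rightarrow> tm \<Rightarrow> nat \<Rightarrow> fm" where "Dv d q w = Ex w (d \<otimes> Var w \<doteq> q)"

lemma sat_Dv[simp]: "maxv d < w \<Longrightarrow> maxv q < w \<Longrightarrow>
  sat M e (Dv d q w) \<longleftrightarrow> (\<exists>a\<in>univ M. tms M (eval M e d) a = eval M e q)"
  by (simp add: Dv_def)

lemma maxv_numt[simp]: "maxv (numt k) = 0" by (induction k) auto
lemma maxv_nsumt: "maxv (nsumt n t) \<le> maxv t" by (induction n) auto

locale MB =
  fixes B :: "'a struc"
  assumes mod: "model_ThN B"
begin

abbreviation "U \<equiv> univ B"
abbreviation "P \<equiv> pl B"
abbreviation "T \<equiv> tms B"
abbreviation "Z \<equiv> zer B"
abbreviation "Ob \<equiv> on B"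

lemma wf: "wf_struc B" using model_wf[OF mod] .
lemma Z_in[simp]: "Z \<in> U" and O_in[simp]: "Ob \<in> U"
  and P_in[simp]: "x \<in> U \<Longrightarrow> y \<in> U \<Longrightarrow> P x y \<in> U"
  and T_in[simp]: "x \<in> U \<Longrightarrow> y \<in> U \<Longrightarrow> T x y \<in> U"
  using wf by (auto simp: wf_struc_def)
lemma num_U[simp]: "num B k \<in> U" using num_in[OF wf] .
lemma nsum_U[simp]: "y \<in> U \<Longrightarrow> nsum B n y \<in> U" using nsum_in[OF wf] .

lemma tr: "(\<And>e. sat Nat_struc e p) \<Longrightarrow> set xs \<subseteq> U \<Longrightarrow> sat B (envl B xs) p"
  by (rule transferB[OF mod])

lemma add0: "x \<in> U \<Longrightarrow> P x Z = x"
proof -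
  assume "x \<in> U"
  then have "sat B (envl B [x]) (Var 0 \<oplus> Zero \<doteq> Var 0)" by (intro tr) auto
  then show ?thesis by (simp add: envl_def)
qed

lemma zadd: "x \<in> U \<Longrightarrow> P Z x = x"
proof -
  assume "x \<in> U"
  then have "sat B (envl B [x]) (Zero \<oplus> Var 0 \<doteq> Var 0)" by (intro tr) auto
  then show ?thesis by (simp add: envl_def)
qed

lemma comm: "x \<in> U \<Longrightarrow> y \<in> U \<Longrightarrow> P x y = P y x"
proof -
  assume "x \<in> U" "y \<in> U"
  then have "sat B (envl B [x,y]) (Var 0 \<oplus> Var 1 \<doteq> Var 1 \<oplus> Var 0)" by (intro tr) auto
  then show ?thesis by (simp add: envl_def)
qed

lemma assoc: "x \<in> U \<Longrightarrow> y \<in> U \<Longrightarrow> z \<in> U \<Longrightarrow> P (P x y) z = P x (P y z)"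
proof -
  assume "x \<in> U" "y \<in> U" "z \<in> U"
  then have "sat B (envl B [x,y,z]) ((Var 0 \<oplus> Var 1) \<oplus> Var 2 \<doteq> Var 0 \<oplus> (Var 1 \<oplus> Var 2))" by (intro tr) auto
  then show ?thesis by (simp add: envl_def)
qed

lemma cancel: "x \<in> U \<Longrightarrow> y \<in> U \<Longrightarrow> z \<in> U \<Longrightarrow> P x z = P y z \<Longrightarrow> x = y"
proof -
  assume "x \<in> U" "y \<in> U" "z \<in> U"
  then have "sat B (envl B [x,y,z]) (Var 0 \<oplus> Var 2 \<doteq> Var 1 \<oplus> Var 2 \<Rrightarrow> Var 0 \<doteq> Var 1)" by (intro tr) auto
  then show "P x z = P y z \<Longrightarrow> x = y" by (simp add: envl_def)
qed

lemma succ_ne: "z \<in> U \<Longrightarrow> Z \<noteq> P z Ob"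
proof -
  assume "z \<in> U"
  then have "sat B (envl B [z]) (Neg (Zero \<doteq> Var 0 \<oplus> One))" by (intro tr) auto
  then show ?thesis by (simp add: envl_def)
qed

lemma pred: "x \<in> U \<Longrightarrow> x \<noteq> Z \<Longrightarrow> \<exists>z\<in>U. x = P z Ob"
proof -
  assume "x \<in> U"
  then have "sat B (envl B [x]) (Neg (Var 0 \<doteq> Zero) \<Rrightarrow> Ex 1 (Var 0 \<doteq> Var 1 \<oplus> One))"
    by (intro tr) (auto, presburger)
  then show "x \<noteq> Z \<Longrightarrow> \<exists>z\<in>U. x = P z Ob" by (simp add: envl_def)
qed

lemma le_iff: "x \<in> U \<Longrightarrow> y \<in> U \<Longrightarrow> le B x y \<longleftrightarrow> (\<exists>z\<in>U. P x z = y)"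
proof -
  assume "x \<in> U" "y \<in> U"
  then have "sat B (envl B [x,y]) ((Var 0 \<preceq> Var 1 \<Rrightarrow> Ex 2 (Var 0 \<oplus> Var 2 \<doteq> Var 1)) \<sqinter>
       (Ex 2 (Var 0 \<oplus> Var 2 \<doteq> Var 1) \<Rrightarrow> Var 0 \<preceq> Var 1))"
    by (intro tr) (auto dest!: le_Suc_ex)
  then show ?thesis by (auto simp: envl_def)
qed

lemma total: "x \<in> U \<Longrightarrow> y \<in> U \<Longrightarrow> le B x y \<or> le B y x"
proof -
  assume "x \<in> U" "y \<in> U"
  then have "sat B (envl B [x,y]) (Var 0 \<preceq> Var 1 \<squnion> Var 1 \<preceq> Var 0)" by (intro tr) auto
  then show ?thesis by (simp add: envl_def)
qed

lemma total_std: "x \<in> U \<Longrightarrow> le B (num B K) x \<or> (\<exists>i\<le>K. x = num B i)"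
proof -
  assume "x \<in> U"
  then have "sat B (envl B [x]) (numt K \<preceq> Var 0 \<squnion> FOrs (map (\<lambda>i. Var 0 \<doteq> numt i) [0..<K+1]))"
    by (intro tr) auto
  then show ?thesis by (simp add: envl_def) (metis atLeastLessThan_iff less_imp_le_nat order_refl)
qed

lemma times0: "x \<in> U \<Longrightarrow> T x Z = Z"
proof -
  assume "x \<in> U"
  then have "sat B (envl B [x]) (Var 0 \<otimes> Zero \<doteq> Zero)" by (intro tr) auto
  then show ?thesis by (simp add: envl_def)
qed

end

lemma n_add: "(c::nat)*a = x \<Longrightarrow> c*b = y \<Longrightarrow> \<exists>k. c*k = x+y" by (metis distrib_left)
lemma n_mul: "(c::nat)*a = x \<Longrightarrow> \<exists>k. c*k = z*x" by (metis mult.left_commute)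
lemma n_sub: "(c::nat)*a = x \<Longrightarrow> r + y = x \<Longrightarrow> c*b = y \<Longrightarrow> \<exists>k. c*k = r"
  by (metis add_diff_cancel_right' diff_mult_distrib2)

context MB
begin

lemma exp_total: "x \<in> U \<Longrightarrow> y \<in> U \<Longrightarrow> \<exists>z\<in>U. BetaExp B x y z"
proof -
  assume "x \<in> U" "y \<in> U"
  then have "sat B (envl B [x,y]) (Ex 2 (expf (Var 0) (Var 1) (Var 2)))" by (intro tr) auto
  then show ?thesis by (simp add: envl_def)
qed

lemma exp_fun: "x \<in> U \<Longrightarrow> y \<in> U \<Longrightarrow> z \<in> U \<Longrightarrow> z' \<in> U \<Longrightarrow>
   BetaExp B x y z \<Longrightarrow> BetaExp B x y z' \<Longrightarrow> z = z'"
proof -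
  assume "x \<in> U" "y \<in> U" "z \<in> U" "z' \<in> U"
  then have "sat B (envl B [x,y,z,z']) (expf (Var 0) (Var 1) (Var 2) \<sqinter> expf (Var 0) (Var 1) (Var 3) \<Rrightarrow> Var 2 \<doteq> Var 3)"
    by (intro tr) auto
  then show "BetaExp B x y z \<Longrightarrow> BetaExp B x y z' \<Longrightarrow> z = z'" by (simp add: envl_def)
qed

lemma exp_rel_iff: "x \<in> U \<Longrightarrow> y \<in> U \<Longrightarrow> z \<in> U \<Longrightarrow> exp_rel B x y z \<longleftrightarrow> BetaExp B x y z"
proof
  assume xyz: "x \<in> U" "y \<in> U" "z \<in> U"
  assume "exp_rel B x y z"
  then obtain \<phi> where d: "defines_exp \<phi>" and s: "sat B (env3 B x y z) \<phi>" unfolding exp_rel_def by blast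
  have "sat B (env3 B x y z) (\<phi> \<Rrightarrow> expf (Var 0) (Var 1) (Var 2))"
  proof (rule transfer[OF mod])
    fix e :: "nat \<Rightarrow> nat"
    have fv: "fv \<phi> \<subseteq> {0,1,2}" using d unfolding defines_exp_def by blast
    have "sat Nat_struc e \<phi> = sat Nat_struc (env3 Nat_struc (e 0) (e 1) (e 2)) \<phi>"
      by (rule sat_cong) (use fv in \<open>auto simp: env3_def\<close>)
    also have "\<dots> \<longleftrightarrow> e 2 = e 0 ^ e 1" using d unfolding defines_exp_def by blast
    finally show "sat Nat_struc e (\<phi> \<Rrightarrow> expf (Var 0) (Var 1) (Var 2))" by simp
  next
    fix i show "env3 B x y z i \<in> U" using xyz by (simp add: env3_def)
  qed
  with s show "BetaExp B x y z" by (simp add: env3_def)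
next
  assume "BetaExp B x y z"
  moreover have "defines_exp (expf (Var 0) (Var 1) (Var 2))"
    unfolding defines_exp_def using fv_expf[of "Var 0" "Var 1" "Var 2"] by (auto simp: env3_def)
  ultimately show "exp_rel B x y z" unfolding exp_rel_def by (intro exI[of _ "expf (Var 0) (Var 1) (Var 2)"]) (simp add: env3_def)
qed

lemma dvd_add: "d \<in> U \<Longrightarrow> a \<in> U \<Longrightarrow> b \<in> U \<Longrightarrow> dvd_in B d a \<Longrightarrow> dvd_in B d b \<Longrightarrow> dvd_in B d (P a b)"
proof -
  assume "d \<in> U" "a \<in> U" "b \<in> U"
  then have "sat B (envl B [d,a,b]) (Dv (Var 0) (Var 1) 3 \<sqinter> Dv (Var 0) (Var 2) 3 \<Rrightarrow> Dv (Var 0) (Var 1 \<oplus> Var 2) 3)"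
    by (intro tr) (auto intro: n_add)
  then show "dvd_in B d a \<Longrightarrow> dvd_in B d b \<Longrightarrow> dvd_in B d (P a b)" by (simp add: envl_def dvd_in_def)
qed

lemma dvd_mul: "d \<in> U \<Longrightarrow> q \<in> U \<Longrightarrow> X \<in> U \<Longrightarrow> dvd_in B d q \<Longrightarrow> dvd_in B d (T X q)"
proof -
  assume "d \<in> U" "q \<in> U" "X \<in> U"
  then have "sat B (envl B [d,q,X]) (Dv (Var 0) (Var 1) 3 \<Rrightarrow> Dv (Var 0) (Var 2 \<otimes> Var 1) 3)"
    by (intro tr) (auto intro: n_mul)
  then show "dvd_in B d q \<Longrightarrow> dvd_in B d (T X q)" by (simp add: envl_def dvd_in_def)
qed

lemma dvd_sub: "d \<in> U \<Longrightarrow> Q \<in> U \<Longrightarrow> Q' \<in> U \<Longrightarrow> R \<in> U \<Longrightarrow>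
   dvd_in B d Q \<Longrightarrow> dvd_in B d Q' \<Longrightarrow> P R Q' = Q \<Longrightarrow> dvd_in B d R"
proof -
  assume "d \<in> U" "Q \<in> U" "Q' \<in> U" "R \<in> U"
  then have "sat B (envl B [d,Q,Q',R]) (Dv (Var 0) (Var 1) 4 \<sqinter> Dv (Var 0) (Var 2) 4 \<sqinter> (Var 3 \<oplus> Var 2 \<doteq> Var 1)
      \<Rrightarrow> Dv (Var 0) (Var 3) 4)"
    by (intro tr) (auto intro: n_sub)
  then show "dvd_in B d Q \<Longrightarrow> dvd_in B d Q' \<Longrightarrow> P R Q' = Q \<Longrightarrow> dvd_in B d R" by (simp add: envl_def dvd_in_def)
qed

lemma dvd_zero: "d \<in> U \<Longrightarrow> dvd_in B d Z"
  unfolding dvd_in_def by (metis times0 Z_in)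

end

locale MBD = MB +
  fixes \<Delta> :: 'a
  assumes ns: "nonstandard_elt B \<Delta>"
begin

lemma D_in[simp]: "\<Delta> \<in> U" using ns by (simp add: nonstandard_elt_def)

definition Ez :: "nat \<Rightarrow> 'a" where
  "Ez n = (SOME z. z \<in> U \<and> BetaExp B (num B 2) (T (num B n) \<Delta>) z)"

lemma Ez: "Ez n \<in> U \<and> BetaExp B (num B 2) (T (num B n) \<Delta>) (Ez n)"
  unfolding Ez_def by (rule someI_ex) (use exp_total[of "num B 2" "T (num B n) \<Delta>"] in auto)

lemma Ez_in[simp]: "Ez n \<in> U" using Ez by blast

lemma good_iff: "good B \<Delta> Q \<longleftrightarrow> Q \<in> U \<and> (\<forall>n>0. dvd_in B (num B n) Q \<and> dvd_in B (Ez n) Q)"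
proof -
  have "\<And>n z. z \<in> U \<Longrightarrow> exp_rel B (num B 2) (T (num B n) \<Delta>) z \<longleftrightarrow> z = Ez n"
    using exp_rel_iff exp_fun Ez by (metis D_in T_in num_U)
  then show ?thesis unfolding good_def by auto
qed

lemma good_U: "good B \<Delta> Q \<Longrightarrow> Q \<in> U" by (simp add: good_iff)

lemma G0: "good B \<Delta> Z" by (simp add: good_iff dvd_zero)

lemma G_add: "good B \<Delta> a \<Longrightarrow> good B \<Delta> b \<Longrightarrow> good B \<Delta> (P a b)"
  by (simp add: good_iff dvd_add)

lemma G_mul: "X \<in> U \<Longrightarrow> good B \<Delta> a \<Longrightarrow> good B \<Delta> (T X a)"
  by (simp add: good_iff dvd_mul)

lemma G_sub: "R \<in> U \<Longrightarrow> good B \<Delta> Q \<Longrightarrow> good B \<Delta> Q' \<Longrightarrow> P R Q' = Q \<Longrightarrow> good B \<Delta> R"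
  unfolding good_iff by (meson dvd_sub num_U Ez_in)

end

lemma pow2_key: "0 < n \<Longrightarrow> 2^(k+n) dvd n*W \<Longrightarrow> 2^k dvd (W::nat)"
proof (induction n rule: less_induct)
  case (less n)
  show ?case
  proof (cases "even n")
    case False
    have "2^k dvd (2::nat)^(k+n)" by (simp add: power_add)
    then have "2^k dvd n*W" using less.prems(2) dvd_trans by blast
    moreover have "coprime ((2::nat)^k) n" using False by simp
    ultimately show ?thesis using coprime_dvd_mult_right_iff by blast
  next
    case True
    then obtain m where nm: "n = 2*m" by blast
    with less.prems have m: "0 < m" "m < n" by auto
    have "2^(k+n) = 2 * (2::nat)^(k+2*m-1)" using nm m by (simp add: power_eq_if)
    with less.prems(2) nm have "2 * 2^(k+2*m-1) dvd 2 * (m*W)" by (simp add: mult.assoc)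
    then have "2^(k+2*m-1) dvd m*W" by simp
    moreover have "(2::nat)^(k+m) dvd 2^(k+2*m-1)" using m by (simp add: power_dvd_imp_le le_imp_power_dvd)
    ultimately have "2^(k+m) dvd m*W" using dvd_trans by blast
    then show ?thesis using less.IH[OF m(2) m(1)] by blast
  qed
qed

lemma gd_nat: "0<n \<Longrightarrow> n*W = (Q::nat) \<Longrightarrow> (m*n)*a = Q \<Longrightarrow> 2^((m+1)*D)*b = Q \<Longrightarrow> n \<le> D \<Longrightarrow>
   (\<exists>c. m*c = W) \<and> (\<exists>c. 2^(m*D)*c = W)"
proof
  assume h: "0<n" "n*W = Q" "(m*n)*a = Q" "2^((m+1)*D)*b = Q" "n \<le> D"
  show "\<exists>c. m*c = W" using h by (metis mult.commute mult.left_commute mult_cancel_left not_gr0)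
  have "2^(m*D + n) dvd (2::nat)^((m+1)*D)" using h(5) by (simp add: le_imp_power_dvd)
  moreover have "2^((m+1)*D) dvd n*W" using h by (metis dvd_triv_left)
  ultimately have "2^(m*D + n) dvd n*W" using dvd_trans by blast
  then have "2^(m*D) dvd W" using pow2_key[OF h(1)] by blast
  then show "\<exists>c. 2^(m*D)*c = W" by (metis dvdE)
qed

context MBD
begin

lemma D_ge: "le B (num B n) \<Delta>"
  using total_std[OF D_in, of n] ns unfolding nonstandard_elt_def by auto

lemma Gdiv: "good B \<Delta> Q \<Longrightarrow> 0 < n \<Longrightarrow> \<exists>W\<in>U. T (num B n) W = Q \<and> good B \<Delta> W"
proof -
  assume gQ: "good B \<Delta> Q" and n: "0 < n"
  then have QU: "Q \<in> U" and dn: "dvd_in B (num B n) Q" by (auto simp: good_iff)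
  then obtain W where WU: "W \<in> U" and W: "T (num B n) W = Q" unfolding dvd_in_def by blast
  have "good B \<Delta> W" unfolding good_iff
  proof (rule conjI[OF WU], intro allI impI)
    fix m :: nat assume m: "0 < m"
    have h1: "dvd_in B (num B (m*n)) Q" using gQ m n by (simp add: good_iff)
    have h2: "dvd_in B (Ez (m+1)) Q" using gQ by (simp add: good_iff)
    have h3: "BetaExp B (num B 2) (T (num B (m+1)) \<Delta>) (Ez (m+1))" using Ez by blast
    have "sat B (envl B [Q, \<Delta>, Ez (m+1), W])
      ((numt n \<otimes> Var 3 \<doteq> Var 0) \<sqinter> Dv (numt (m*n)) (Var 0) 4 \<sqinter>
        expf (numt 2) (numt (m+1) \<otimes> Var 1) (Var 2) \<sqinter> Dv (Var 2) (Var 0) 4 \<sqinter> (numt n \<preceq> Var 1)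
       \<Rrightarrow> Dv (numt m) (Var 3) 4 \<sqinter> Ex 5 (expf (numt 2) (numt m \<otimes> Var 1) (Var 5) \<sqinter> Dv (Var 5) (Var 3) 6))"
      apply (rule tr)
      subgoal using gd_nat n by auto
      subgoal using QU WU by simp
      done
    then have "dvd_in B (num B m) W \<and> (\<exists>E\<in>U. BetaExp B (num B 2) (T (num B m) \<Delta>) E \<and> dvd_in B E W)"
      using W h1 h2 h3 D_ge[of n] by (simp add: envl_def dvd_in_def)
    then show "dvd_in B (num B m) W \<and> dvd_in B (Ez m) W"
      using exp_fun Ez by (metis D_in T_in num_U)
  qed
  then show ?thesis using WU W by blast
qed

end

lemma mul_int: "(x::int) + a + k1 = b + k1' \<Longrightarrow> y + c + k2 = d + k2' \<Longrightarrow>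
  x*y + (x*c + k2*b + k2'*a) + (k2*k1' + k2'*k1) = (x*d + k2'*b + k2*a) + (k2'*k1' + k2*k1)"
  by algebra

lemma mul_nat: "(x::nat) + a + k1 = b + k1' \<Longrightarrow> y + c + k2 = d + k2' \<Longrightarrow>
  x*y + (x*c + k2*b + k2'*a) + (k2*k1' + k2'*k1) = (x*d + k2'*b + k2*a) + (k2'*k1' + k2*k1)"
proof -
  assume h1: "x + a + k1 = b + k1'" and h2: "y + c + k2 = d + k2'"
  have h1': "int x + int a + int k1 = int b + int k1'" using h1 by (metis of_nat_add)
  have h2': "int y + int c + int k2 = int d + int k2'" using h2 by (metis of_nat_add)
  from mul_int[OF h1' h2'] show ?thesis
    by (simp only: of_nat_add[symmetric] of_nat_mult[symmetric] of_nat_eq_iff)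
qed

lemma div_nat: "0 < (n::nat) \<Longrightarrow> \<exists>i\<in>{0..<n}. \<exists>a. x = i + a * n \<and> a * n \<le> x \<and> x \<le> n + a * n \<and> x \<noteq> n + a * n"
proof -
  assume n: "0 < n"
  have 1: "x = x mod n + (x div n) * n" by simp
  have 2: "x mod n < n" using n by simp
  have "x mod n \<in> {0..<n} \<and> x = x mod n + (x div n) * n \<and> (x div n) * n \<le> x \<and> x \<le> n + (x div n) * n \<and> x \<noteq> n + (x div n) * n"
    using 1 2 by (metis atLeastLessThan_iff zero_le le_add2 add_le_mono1 less_imp_le_nat nat_neq_iff add_less_mono1)
  then show ?thesis by blast
qed

lemma nd_nat: "0 < (n::nat) \<Longrightarrow> n*y + n*W' + j = n*W + j' \<Longrightarrow>
   \<exists>i<j+j'+1. \<exists>i'<j+j'+1. y + W' + i = W + i'"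
proof -
  assume n: "0 < n" and h: "n*y + n*W' + j = n*W + j'"
  show ?thesis
  proof (cases "W \<le> y + W'")
    case True
    define d where "d = y + W' - W"
    have "y + W' = W + d" using True unfolding d_def by simp
    then have "n*(y+W') = n*W + n*d" by (simp add: algebra_simps)
    then have "n*d + j = j'" using h by (simp add: algebra_simps)
    moreover have "d \<le> n*d" using n by simp
    ultimately have "d \<le> j'" by linarith
    then have "(0::nat) < j+j'+1" "d < j+j'+1" "y + W' + 0 = W + d" using \<open>y + W' = W + d\<close> by auto
    then show ?thesis by (intro exI[of _ 0] conjI exI[of _ d]) simp_all
  next
    case False
    define d where "d = W - (y + W')"
    have "W = y + W' + d" using False unfolding d_def by simp
    then have "n*W = n*(y+W') + n*d" by (simp add: algebra_simps)
    then have "j = n*d + j'" using h by (simp add: algebra_simps)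
    moreover have "d \<le> n*d" using n by simp
    ultimately have "d \<le> j" by linarith
    then have "(0::nat) < j+j'+1" "d < j+j'+1" "y + W' + d = W + 0" using \<open>W = y + W' + d\<close> by auto
    then show ?thesis by (intro exI[of _ d] conjI exI[of _ 0]) simp_all
  qed
qed

lemma sat_FOrs_pairs: "sat M e (FOrs (concat (map (\<lambda>i. map (\<lambda>i'. f i i') [0..<K]) [0..<K]))) \<longleftrightarrow>
   (\<exists>i<K. \<exists>i'<K. sat M e (f i i'))"
proof
  assume "sat M e (FOrs (concat (map (\<lambda>i. map (\<lambda>i'. f i i') [0..<K]) [0..<K])))"
  then obtain p where p: "p \<in> set (concat (map (\<lambda>i. map (\<lambda>i'. f i i') [0..<K]) [0..<K]))" "sat M e p"
    unfolding sat_FOrs by blast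
  from p(1) obtain i i' where "i<K" "i'<K" "p = f i i'" by auto
  with p(2) show "\<exists>i<K. \<exists>i'<K. sat M e (f i i')" by blast
next
  assume "\<exists>i<K. \<exists>i'<K. sat M e (f i i')"
  then obtain i i' where h: "i<K" "i'<K" "sat M e (f i i')" by blast
  have m1: "f i i' \<in> set (map (\<lambda>i'. f i i') [0..<K])" using h by simp
  have m2: "map (\<lambda>i'. f i i') [0..<K] \<in> set (map (\<lambda>i. map (\<lambda>i'. f i i') [0..<K]) [0..<K])"
    unfolding set_map using h by (intro image_eqI[of _ _ i]) auto
  have "f i i' \<in> set (concat (map (\<lambda>i. map (\<lambda>i'. f i i') [0..<K]) [0..<K]))"
    unfolding set_concat using m1 m2 by blast
  with h(3) show "sat M e (FOrs (concat (map (\<lambda>i. map (\<lambda>i'. f i i') [0..<K]) [0..<K])))"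
    unfolding sat_FOrs by blast
qed

context MBD
begin

definition A2 :: "'a set" where
  "A2 = {x\<in>U. \<exists>a b j j'. good B \<Delta> a \<and> good B \<Delta> b \<and> P (P x a) (num B j) = P b (num B j')}"

lemma A2_U: "x \<in> A2 \<Longrightarrow> x \<in> U" by (simp add: A2_def)

lemma A2I: "x \<in> U \<Longrightarrow> good B \<Delta> a \<Longrightarrow> good B \<Delta> b \<Longrightarrow> P (P x a) (num B j) = P b (num B j') \<Longrightarrow> x \<in> A2"
  unfolding A2_def by blast

lemma A2E: "x \<in> A2 \<Longrightarrow> (\<And>a b j j'. x \<in> U \<Longrightarrow> good B \<Delta> a \<Longrightarrow> good B \<Delta> b \<Longrightarrow>
    P (P x a) (num B j) = P b (num B j') \<Longrightarrow> thesis) \<Longrightarrow> thesis"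
  unfolding A2_def by blast

lemma A_eq: "A_univ B \<Delta> = A2"
proof
  show "A_univ B \<Delta> \<subseteq> A2"
  proof
    fix x assume "x \<in> A_univ B \<Delta>"
    then obtain Q k where x: "x \<in> U" and Q: "good B \<Delta> Q" and k: "x = P Q (num B k) \<or> P x (num B k) = Q"
      unfolding A_univ_def by blast
    have QU: "Q \<in> U" using good_U[OF Q] .
    from k show "x \<in> A2"
    proof
      assume "x = P Q (num B k)"
      then have "P (P x Z) (num B 0) = P Q (num B k)" using x by (simp add: add0)
      then show ?thesis using x G0 Q by (intro A2I)
    next
      assume "P x (num B k) = Q"
      then have "P (P x Z) (num B k) = P Q (num B 0)" using x QU by (simp add: add0)
      then show ?thesis using x G0 Q by (intro A2I)
    qed
  qed
next
  show "A2 \<subseteq> A_univ B \<Delta>"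
  proof
    fix x assume "x \<in> A2"
    then obtain a b j j' where x: "x \<in> U" and a: "good B \<Delta> a" and b: "good B \<Delta> b"
      and e: "P (P x a) (num B j) = P b (num B j')" by (elim A2E)
    have aU: "a \<in> U" and bU: "b \<in> U" using a b good_U by auto
    from total[OF aU bU] show "x \<in> A_univ B \<Delta>"
    proof
      assume "le B a b"
      then obtain t where tU: "t \<in> U" and t: "P a t = b" using le_iff aU bU by blast
      have gt: "good B \<Delta> t" using G_sub[OF tU b a] t comm[OF aU tU] by simp
      have "sat B (envl B [x,a,b,t]) (((Var 0 \<oplus> Var 1) \<oplus> numt j \<doteq> Var 2 \<oplus> numt j') \<sqinter> (Var 1 \<oplus> Var 3 \<doteq> Var 2)
          \<Rrightarrow> (Var 0 \<doteq> Var 3 \<oplus> numt (j'-j)) \<squnion> (Var 0 \<oplus> numt (j-j') \<doteq> Var 3))"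
        apply (rule tr)
        subgoal by auto
        subgoal using x aU bU tU by simp
        done
      then have "x = P t (num B (j'-j)) \<or> P x (num B (j-j')) = t" using e t by (simp add: envl_def)
      then show ?thesis using x gt unfolding A_univ_def by blast
    next
      assume "le B b a"
      then obtain t where tU: "t \<in> U" and t: "P b t = a" using le_iff aU bU by blast
      have "sat B (envl B [x,a,b,t]) (((Var 0 \<oplus> Var 1) \<oplus> numt j \<doteq> Var 2 \<oplus> numt j') \<sqinter> (Var 2 \<oplus> Var 3 \<doteq> Var 1)
          \<Rrightarrow> FOrs (map (\<lambda>i. Var 0 \<doteq> Zero \<oplus> numt i) [0..<j'+1]))"
        apply (rule tr)
        subgoal by auto
        subgoal using x aU bU tU by simp
        done
      then have "\<exists>i. x = P Z (num B i)" using e t by (auto simp: envl_def)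
      then show ?thesis using x G0 unfolding A_univ_def by blast
    qed
  qed
qed

lemma A2_Z: "Z \<in> A2"
  by (rule A2I[of _ Z Z 0 0]) (simp_all add: G0 add0)

lemma A2_O: "Ob \<in> A2"
  by (rule A2I[of _ Z Z 0 1]) (simp_all add: G0 add0 zadd)

lemma A2_num: "num B i \<in> A2"
  by (rule A2I[of _ Z Z 0 i]) (simp_all add: G0 add0 zadd)

lemma A2_add: "x \<in> A2 \<Longrightarrow> y \<in> A2 \<Longrightarrow> P x y \<in> A2"
proof -
  assume "x \<in> A2" "y \<in> A2"
  then obtain a b j1 j1' c d j2 j2' where x: "x \<in> U" and a: "good B \<Delta> a" and b: "good B \<Delta> b"
      and e1: "P (P x a) (num B j1) = P b (num B j1')"
      and y: "y \<in> U" and c: "good B \<Delta> c" and d: "good B \<Delta> d"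
      and e2: "P (P y c) (num B j2) = P d (num B j2')" by (metis A2E)
  have U: "a \<in> U" "b \<in> U" "c \<in> U" "d \<in> U" using a b c d good_U by auto
  have "sat B (envl B [x,y,a,b,c,d]) (((Var 0 \<oplus> Var 2) \<oplus> numt j1 \<doteq> Var 3 \<oplus> numt j1') \<sqinter>
      ((Var 1 \<oplus> Var 4) \<oplus> numt j2 \<doteq> Var 5 \<oplus> numt j2') \<Rrightarrow>
      ((Var 0 \<oplus> Var 1) \<oplus> (Var 2 \<oplus> Var 4)) \<oplus> numt (j1+j2) \<doteq> (Var 3 \<oplus> Var 5) \<oplus> numt (j1'+j2'))"
    apply (rule tr)
    subgoal by auto
    subgoal using x y U by simp
    done
  then have "P (P (P x y) (P a c)) (num B (j1+j2)) = P (P b d) (num B (j1'+j2'))"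
    using e1 e2 by (simp add: envl_def)
  then show ?thesis using x y a b c d by (intro A2I[of "P x y" "P a c" "P b d" "j1+j2" "j1'+j2'"]) (auto intro: G_add)
qed

lemma A2_mul: "x \<in> A2 \<Longrightarrow> y \<in> A2 \<Longrightarrow> T x y \<in> A2"
proof -
  assume "x \<in> A2" "y \<in> A2"
  then obtain a b j1 j1' c d j2 j2' where x: "x \<in> U" and a: "good B \<Delta> a" and b: "good B \<Delta> b"
      and e1: "P (P x a) (num B j1) = P b (num B j1')"
      and y: "y \<in> U" and c: "good B \<Delta> c" and d: "good B \<Delta> d"
      and e2: "P (P y c) (num B j2) = P d (num B j2')" by (metis A2E)
  have U: "a \<in> U" "b \<in> U" "c \<in> U" "d \<in> U" using a b c d good_U by auto
  have "sat B (envl B [x,y,a,b,c,d]) (((Var 0 \<oplus> Var 2) \<oplus> numt j1 \<doteq> Var 3 \<oplus> numt j1') \<sqinter>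
      ((Var 1 \<oplus> Var 4) \<oplus> numt j2 \<doteq> Var 5 \<oplus> numt j2') \<Rrightarrow>
      (Var 0 \<otimes> Var 1 \<oplus> ((Var 0 \<otimes> Var 4 \<oplus> numt j2 \<otimes> Var 3) \<oplus> numt j2' \<otimes> Var 2)) \<oplus> numt (j2*j1' + j2'*j1)
      \<doteq> ((Var 0 \<otimes> Var 5 \<oplus> numt j2' \<otimes> Var 3) \<oplus> numt j2 \<otimes> Var 2) \<oplus> numt (j2'*j1' + j2*j1))"
    apply (rule tr)
    subgoal using mul_nat by auto
    subgoal using x y U by simp
    done
  then have "P (P (T x y) (P (P (T x c) (T (num B j2) b)) (T (num B j2') a))) (num B (j2*j1' + j2'*j1))
      = P (P (P (T x d) (T (num B j2') b)) (T (num B j2) a)) (num B (j2'*j1' + j2*j1))"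
    using e1 e2 by (simp add: envl_def)
  moreover have "good B \<Delta> (P (P (T x c) (T (num B j2) b)) (T (num B j2') a))"
    using x c b a by (intro G_add G_mul) auto
  moreover have "good B \<Delta> (P (P (T x d) (T (num B j2') b)) (T (num B j2) a))"
    using x d b a by (intro G_add G_mul) auto
  ultimately show ?thesis using x y
    by (intro A2I[of "T x y" "P (P (T x c) (T (num B j2) b)) (T (num B j2') a)"
       "P (P (T x d) (T (num B j2') b)) (T (num B j2) a)" "j2*j1' + j2'*j1" "j2'*j1' + j2*j1"]) auto
qed

lemma A2_sub: "z \<in> U \<Longrightarrow> w \<in> A2 \<Longrightarrow> P z w \<in> A2 \<Longrightarrow> z \<in> A2"
proof -
  assume z: "z \<in> U" and "w \<in> A2" "P z w \<in> A2"
  then obtain a b j j' c d l l' where w: "w \<in> U" and a: "good B \<Delta> a" and b: "good B \<Delta> b"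
      and e1: "P (P w a) (num B j) = P b (num B j')"
      and c: "good B \<Delta> c" and d: "good B \<Delta> d"
      and e2: "P (P (P z w) c) (num B l) = P d (num B l')" by (metis A2E)
  have U: "a \<in> U" "b \<in> U" "c \<in> U" "d \<in> U" using a b c d good_U by auto
  have "sat B (envl B [z,w,a,b,c,d]) (((Var 1 \<oplus> Var 2) \<oplus> numt j \<doteq> Var 3 \<oplus> numt j') \<sqinter>
      (((Var 0 \<oplus> Var 1) \<oplus> Var 4) \<oplus> numt l \<doteq> Var 5 \<oplus> numt l') \<Rrightarrow>
      (Var 0 \<oplus> (Var 3 \<oplus> Var 4)) \<oplus> numt (j'+l) \<doteq> (Var 5 \<oplus> Var 2) \<oplus> numt (l'+j))"
    apply (rule tr)
    subgoal by auto
    subgoal using z w U by simp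
    done
  then have "P (P z (P b c)) (num B (j'+l)) = P (P d a) (num B (l'+j))"
    using e1 e2 by (simp add: envl_def)
  then show ?thesis using z a b c d by (intro A2I[of z "P b c" "P d a" "j'+l" "l'+j"]) (auto intro: G_add)
qed

lemma A2_ndiv: "0 < n \<Longrightarrow> y \<in> U \<Longrightarrow> nsum B n y \<in> A2 \<Longrightarrow> y \<in> A2"
proof -
  assume n: "0 < n" and y: "y \<in> U" and "nsum B n y \<in> A2"
  then obtain a b j j' where a: "good B \<Delta> a" and b: "good B \<Delta> b"
      and e: "P (P (nsum B n y) a) (num B j) = P b (num B j')" by (metis A2E)
  obtain W' where W'U: "W' \<in> U" and W': "T (num B n) W' = a" and gW': "good B \<Delta> W'"
    using Gdiv[OF a n] by blast
  obtain W where WU: "W \<in> U" and W: "T (num B n) W = b" and gW: "good B \<Delta> W"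
    using Gdiv[OF b n] by blast
  have "sat B (envl B [y,W,W']) ((nsumt n (Var 0) \<oplus> (numt n \<otimes> Var 2)) \<oplus> numt j \<doteq> (numt n \<otimes> Var 1) \<oplus> numt j'
      \<Rrightarrow> FOrs (concat (map (\<lambda>i. map (\<lambda>i'. (Var 0 \<oplus> Var 2) \<oplus> numt i \<doteq> Var 1 \<oplus> numt i')
              [0..<j+j'+1]) [0..<j+j'+1])))"
    apply (rule tr)
    subgoal for e apply (simp only: sat_FImp sat_FOrs_pairs)
      using nd_nat[OF n, of "e 0" "e 2" j "e 1" j'] by simp
    subgoal using y WU W'U by simp
    done
  then have "\<exists>i i'. P (P y W') (num B i) = P W (num B i')"
    using e W W' apply (simp only: sat_FImp sat_FOrs_pairs) by (auto simp: envl_def)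
  then show ?thesis using y gW gW' by (metis A2I)
qed

lemma A2_div: "0 < n \<Longrightarrow> x \<in> A2 \<Longrightarrow>
  \<exists>y\<in>A2. le B (nsum B n y) x \<and> le B x (nsum B n (P y Ob)) \<and> x \<noteq> nsum B n (P y Ob)"
proof -
  assume n: "0 < n" and xA: "x \<in> A2"
  have x: "x \<in> U" using A2_U[OF xA] .
  have "sat B (envl B [x]) (FOrs (map (\<lambda>i. Ex 1 ((Var 0 \<doteq> nsumt n (Var 1) \<oplus> numt i) \<sqinter>
          (nsumt n (Var 1) \<preceq> Var 0) \<sqinter> (Var 0 \<preceq> nsumt n (Var 1 \<oplus> One)) \<sqinter>
          Neg (Var 0 \<doteq> nsumt n (Var 1 \<oplus> One)))) [0..<n]))"
    apply (rule tr)
    subgoal apply (simp add: algebra_simps) using div_nat[OF n] by blast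
    subgoal using x by simp
    done
  then obtain i y where y: "y \<in> U" and e: "x = P (nsum B n y) (num B i)"
     and l: "le B (nsum B n y) x \<and> le B x (nsum B n (P y Ob)) \<and> x \<noteq> nsum B n (P y Ob)"
    by (auto simp: envl_def)
  have "nsum B n y \<in> A2" using A2_sub[OF nsum_U[OF y] A2_num] e xA by simp
  then have "y \<in> A2" using A2_ndiv[OF n y] by blast
  with l show ?thesis by blast
qed

end

lemma restrict_simps[simp]: "univ (restrict_struc B A) = A" "zer (restrict_struc B A) = zer B"
  "on (restrict_struc B A) = on B" "pl (restrict_struc B A) = pl B" "tms (restrict_struc B A) = tms B"
  "le (restrict_struc B A) = le B"
  by (simp_all add: restrict_struc_def)

lemma nsum_restrict[simp]: "nsum (restrict_struc B A) n y = nsum B n y"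
  by (induction n) simp_all

context MBD
begin

lemma subst_A2: "substructure A2 B"
  unfolding substructure_def using A2_U A2_Z A2_O A2_add A2_mul by blast

lemma presb_A2: "presburger (restrict_struc B A2)"
  unfolding presburger_def restrict_simps nsum_restrict
proof (intro conjI ballI impI allI)
  fix z assume "z \<in> A2" then show "Z \<noteq> P z Ob" using succ_ne A2_U by blast
next
  fix x assume x: "x \<in> A2" "x \<noteq> Z"
  then obtain z where z: "z \<in> U" "x = P z Ob" using pred A2_U by blast
  then have "z \<in> A2" using A2_sub[OF z(1) A2_O] x(1) by simp
  then show "\<exists>z\<in>A2. x = P z Ob" using z by blast
next
  fix x y z assume "x \<in> A2" "y \<in> A2" "z \<in> A2" "P x z = P y z"
  then show "x = y" using cancel A2_U by blast
next
  fix x assume "x \<in> A2" then show "P x Z = x" using add0 A2_U by blast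
next
  fix x y z assume "x \<in> A2" "y \<in> A2" "z \<in> A2"
  then show "P (P x y) z = P x (P y z)" using assoc A2_U by blast
next
  fix x y assume "x \<in> A2" "y \<in> A2"
  then show "P x y = P y x" using comm A2_U by blast
next
  fix x y assume xy: "x \<in> A2" "y \<in> A2"
  then have xU: "x \<in> U" and yU: "y \<in> U" using A2_U by auto
  show "le B x y \<longleftrightarrow> (\<exists>z\<in>A2. P x z = y)"
  proof
    assume "le B x y"
    then obtain z where z: "z \<in> U" "P x z = y" using le_iff xU yU by blast
    then have "P z x = y" using comm xU by simp
    then have "z \<in> A2" using A2_sub[OF z(1) xy(1)] xy(2) by simp
    then show "\<exists>z\<in>A2. P x z = y" using z by blast
  next
    assume "\<exists>z\<in>A2. P x z = y"
    then show "le B x y" using le_iff xU yU A2_U by blast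
  qed
next
  fix n :: nat and x assume "0 < n" "x \<in> A2"
  then show "\<exists>y\<in>A2. le B (nsum B n y) x \<and> le B x (nsum B n (P y Ob)) \<and> x \<noteq> nsum B n (P y Ob)"
    by (rule A2_div)
qed

end

theorem lemma4p3:
  fixes B :: "'a struc" and \<Delta> :: 'a
  assumes "model_ThN B"
    and "\<exists>x. nonstandard_elt B x"
    and "nonstandard_elt B \<Delta>"
  shows "substructure (A_univ B \<Delta>) B \<and> presburger (restrict_struc B (A_univ B \<Delta>))"
proof -
  interpret MBD B \<Delta> by unfold_locales (rule assms(1), rule assms(3))
  show ?thesis unfolding A_eq using subst_A2 presb_A2 by blast
qed

end
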